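(* Let $F$ be a field containing $\mathcal K$ and $w_1,\dots,w_N:\mathbb C\to F$ functions with $L(u)w_m(u)=0$ for all $1\le m\le N$ and $\xi(u)\ne0$ for all $u$. Then (i) for $1\le a\le N-1$ and $m\ge1$: $\xi^{(a)}_m(u)\xi^{(a)}_m(u+1)-\xi^{(a)}_{m+1}(u)\xi^{(a)}_{m-1}(u+1)-\xi^{(a+1)}_m(u)\xi^{(a-1)}_m(u+1)=0$; (ii) for $0\le a\le N$ and $m\ge0$: $\xi^{(a)}_m(u)=(-1)^{a-\frac N2+m}\,\xi^{(N-a)}_m\bigl(u+a-\frac N2\bigr)$.
   Context: Fix an integer $n\ge 2$ and put $N=2n+2$. Let $Q_a(u)$ ($1\le a\le n$, $u\in\mathbb C$) be algebraically independent commuting indeterminates, $\mathcal K$ the field of fractions of $\mathbb Z[Q_a(u)^{\pm1}]$. Put $d_a=1+\delta_{an}$, $Y_a(u)=Q_a(u-\frac{d_a}{2})/Q_a(u+\frac{d_a}{2})$ for $1\le a\le n$, $Y_0(u)=1$. For $1\le a\le n$ set $z_a(u)=\frac{Y_a(u+\frac a2)}{Y_{a-1}(u+\frac{a+1}2)}$, $z_{\bar a}(u)=\frac{Y_{a-1}(u+\frac{2n-a+3}2)}{Y_a(u+\frac{2n-a+4}2)}$; set $x_a(u)=z_a(u)$, $x_{2n+3-a}(u)=z_{\bar a}(u)$ for $1\le a\le n$, and $x_{n+1}(u)=-x_{n+2}(u)=\frac{Q_n(u+\frac n2)Q_n(u+\frac{n+4}2)}{Q_n(u+\frac{n+2}2)^2}$.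 $D$ is the shift operator ($D\,c(u)=c(u+1)D$), acting on $w:\mathbb C\to F$ by $(\sum_jc_jD^j)w(u)=\sum_jc_j(u)w(u+j)$. Define $L(u)=\prod_{i=1}^{N}(x_i(u+n+1-i)-D)$, factors ordered $i=1,\dots,N$ from left to right (a polynomial in $D$ with coefficients in $\mathcal K$). Casorati determinants: for integers $i_1,\dots,i_m$ ($m\le N$), $[i_1,\dots,i_m]$ is the function $u\mapsto\det(w_r(u+i_s))_{1\le r,s\le m}$. For $0\le a\le N$ and $m\ge0$ let $\xi^{(a)}_m(u)=[0,1,\dots,a-1,a+m,a+m+1,\dots,N+m-1]$ (an $N\times N$ Casorati determinant), and $\xi(u)=[0,1,\dots,N-1]$. *)

theory Defs
  imports Complex_Main "Jordan_Normal_Form.Determinant"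
begin

(* Rank n of the algebra; N = 2n+2. Q a u are the indeterminates Q_a(u), valued in the field F. *)

definition dd :: "nat \<Rightarrow> nat \<Rightarrow> complex" where
  "dd n a = (if a = n then 2 else 1)"

definition Yf :: "nat \<Rightarrow> (nat \<Rightarrow> complex \<Rightarrow> 'F::field) \<Rightarrow> nat \<Rightarrow> complex \<Rightarrow> 'F" where
  "Yf n Q a u = (if a = 0 then 1 else Q a (u - dd n a / 2) / Q a (u + dd n a / 2))"

definition zf :: "nat \<Rightarrow> (nat \<Rightarrow> complex \<Rightarrow> 'F::field) \<Rightarrow> nat \<Rightarrow> complex \<Rightarrow> 'F" where
  "zf n Q a u = Yf n Q a (u + of_nat a / 2) / Yf n Q (a - 1) (u + (of_nat a + 1) / 2)"

definition zbarf :: "nat \<Rightarrow> (nat \<Rightarrow> complex \<Rightarrow> 'F::field) \<Rightarrow> nat \<Rightarrow> complex \<Rightarrow> 'F" where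
  "zbarf n Q a u = Yf n Q (a - 1) (u + (2 * of_nat n - of_nat a + 3) / 2)
                   / Yf n Q a (u + (2 * of_nat n - of_nat a + 4) / 2)"

definition xmid :: "nat \<Rightarrow> (nat \<Rightarrow> complex \<Rightarrow> 'F::field) \<Rightarrow> complex \<Rightarrow> 'F" where
  "xmid n Q u = Q n (u + of_nat n / 2) * Q n (u + (of_nat n + 4) / 2) / (Q n (u + (of_nat n + 2) / 2))^2"

definition xf :: "nat \<Rightarrow> (nat \<Rightarrow> complex \<Rightarrow> 'F::field) \<Rightarrow> nat \<Rightarrow> complex \<Rightarrow> 'F" where
  "xf n Q i u =
     (if 1 \<le> i \<and> i \<le> n then zf n Q i u
      else if i = n + 1 then xmid n Q u
      else if i = n + 2 then - xmid n Q u
      else if n + 3 \<le> i \<and> i \<le> 2 * n + 2 then zbarf n Q (2 * n + 3 - i) u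
      else 0)"

definition Lfactor :: "nat \<Rightarrow> (nat \<Rightarrow> complex \<Rightarrow> 'F::field) \<Rightarrow> nat \<Rightarrow> (complex \<Rightarrow> 'F) \<Rightarrow> complex \<Rightarrow> 'F" where
  "Lfactor n Q i g u = xf n Q i (u + of_nat n + 1 - of_nat i) * g u - g (u + 1)"

(* L(u) = prod_{i=1}^{N} (x_i(u+n+1-i) - D), factors left to right, acting on g *)
definition Lop :: "nat \<Rightarrow> (nat \<Rightarrow> complex \<Rightarrow> 'F::field) \<Rightarrow> (complex \<Rightarrow> 'F) \<Rightarrow> complex \<Rightarrow> 'F" where
  "Lop n Q g = foldr (Lfactor n Q) [1..<2 * n + 3] g"

(* Casorati determinant [idx 0, ..., idx (m-1)] of w_1, ..., w_m *)
definition casorati :: "(nat \<Rightarrow> complex \<Rightarrow> 'F::field) \<Rightarrow> nat \<Rightarrow> (nat \<Rightarrow> int) \<Rightarrow> complex \<Rightarrow> 'F" where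
  "casorati w m idx u = det (mat m m (\<lambda>(r, s). w (r + 1) (u + of_int (idx s))))"

(* xi^(a)_m(u) = [0,...,a-1,a+m,...,N+m-1] *)
definition xi_am :: "(nat \<Rightarrow> complex \<Rightarrow> 'F::field) \<Rightarrow> nat \<Rightarrow> nat \<Rightarrow> nat \<Rightarrow> complex \<Rightarrow> 'F" where
  "xi_am w N a m u = casorati w N (\<lambda>s. if s < a then int s else int (s + m)) u"

definition xi0 :: "(nat \<Rightarrow> complex \<Rightarrow> 'F::field) \<Rightarrow> nat \<Rightarrow> complex \<Rightarrow> 'F" where
  "xi0 w N u = casorati w N (\<lambda>s. int s) u"

(* The elements Q a u (1 <= a <= n, u complex) of F are algebraically independent over Z,
   i.e. Z[Q_a(u)^{+-1}] (hence its fraction field K) embeds in F via Q_a(u) |-> Q a u. *)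
definition alg_indep :: "nat \<Rightarrow> (nat \<Rightarrow> complex \<Rightarrow> 'F::field) \<Rightarrow> bool" where
  "alg_indep n Q \<longleftrightarrow>
    (\<forall>(S :: ((nat \<times> complex) \<Rightarrow> nat) set) (c :: ((nat \<times> complex) \<Rightarrow> nat) \<Rightarrow> int).
       finite S
       \<and> (\<forall>e\<in>S. finite {p. e p \<noteq> 0} \<and> (\<forall>p. e p \<noteq> 0 \<longrightarrow> fst p \<in> {1..n}))
       \<and> (\<Sum>e\<in>S. of_int (c e) * (\<Prod>p\<in>{p. e p \<noteq> 0}. Q (fst p) (snd p) ^ e p)) = 0
       \<longrightarrow> (\<forall>e\<in>S. c e = 0))"

end

theory Submission
  imports Defs
begin

fun coef :: "(complex \<Rightarrow> 'F::field) list \<Rightarrow> int \<Rightarrow> complex \<Rightarrow> 'F" where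
  "coef [] t u = (if t = 0 then 1 else 0)"
| "coef (X # Xs) t u = X u * coef Xs t u - coef Xs (t - 1) (u + 1)"

lemma coef_out: "t < 0 \<or> t > int (length Xs) \<Longrightarrow> coef Xs t u = 0"
  by (induction Xs arbitrary: t u) auto

lemma coef_top: "coef Xs (int (length Xs)) u = (-1) ^ length Xs"
proof (induction Xs arbitrary: u)
  case Nil then show ?case by simp
next
  case (Cons X Xs)
  have "coef Xs (int (length Xs) + 1) u = 0" by (rule coef_out) auto
  then have "coef Xs (1 + int (length Xs)) u = 0" by (simp add: add.commute)
  then show ?case using Cons by simp
qed

lemma coef_snoc: "coef (Xs @ [X]) t u = coef Xs t u * X (u + of_int t) - coef Xs (t - 1) u"
proof (induction Xs arbitrary: t u)
  case Nil then show ?case by auto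
next
  case (Cons Y Xs)
  have e: "u + 1 + of_int (t - 1) = u + of_int t" by simp
  have "coef ((Y # Xs) @ [X]) t u = Y u * coef (Xs @ [X]) t u - coef (Xs @ [X]) (t - 1) (u + 1)" by simp
  also have "\<dots> = Y u * (coef Xs t u * X (u + of_int t) - coef Xs (t - 1) u)
     - (coef Xs (t - 1) (u + 1) * X (u + 1 + of_int (t - 1)) - coef Xs (t - 1 - 1) (u + 1))"
    by (simp only: Cons)
  also have "\<dots> = coef (Y # Xs) t u * X (u + of_int t) - coef (Y # Xs) (t - 1) u"
    by (simp only: e coef.simps) (simp add: algebra_simps)
  finally show ?case .
qed

definition opf :: "(complex \<Rightarrow> 'F::field) list \<Rightarrow> (complex \<Rightarrow> 'F) \<Rightarrow> complex \<Rightarrow> 'F" where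
  "opf Xs g = foldr (\<lambda>X h u. X u * h u - h (u + 1)) Xs g"

lemma opf_Cons: "opf (X # Xs) g u = X u * opf Xs g u - opf Xs g (u + 1)"
  by (simp add: opf_def)

lemma opf_expand: "opf Xs g u = (\<Sum>t\<le>length Xs. coef Xs (int t) u * g (u + of_nat t))"
proof (induction Xs arbitrary: u)
  case Nil then show ?case by (simp add: opf_def)
next
  case (Cons X Xs)
  let ?L = "length Xs"
  have z1: "coef Xs (int (Suc ?L)) u = 0" by (rule coef_out) auto
  have z2: "coef Xs (-1) (u+1) = 0" by (rule coef_out) auto
  have "opf (X # Xs) g u = X u * opf Xs g u - opf Xs g (u + 1)" by (rule opf_Cons)
  also have "X u * opf Xs g u = (\<Sum>t\<le>Suc ?L. X u * coef Xs (int t) u * g (u + of_nat t))"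
    using Cons z1 by (simp add: sum_distrib_left mult.assoc)
  also have "opf Xs g (u + 1) = (\<Sum>t\<le>Suc ?L. coef Xs (int t - 1) (u + 1) * g (u + of_nat t))"
  proof -
    have "opf Xs g (u + 1) = (\<Sum>t\<le>?L. coef Xs (int t) (u+1) * g (u + 1 + of_nat t))" by (rule Cons)
    also have "\<dots> = (\<Sum>t\<le>?L. coef Xs (int (Suc t) - 1) (u+1) * g (u + of_nat (Suc t)))"
      by (simp add: algebra_simps)
    also have "\<dots> = (\<Sum>t\<le>Suc ?L. coef Xs (int t - 1) (u + 1) * g (u + of_nat t))"
      by (subst sum.atMost_Suc_shift) (simp add: z2)
    finally show ?thesis .
  qed
  finally have "opf (X # Xs) g u = (\<Sum>t\<le>Suc ?L. X u * coef Xs (int t) u * g (u + of_nat t)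
     - coef Xs (int t - 1) (u + 1) * g (u + of_nat t))" by (simp only: sum_subtractf)
  then show ?case by (simp add: left_diff_distrib)
qed

lemma alg_sym:
  fixes A B P R f0 f1 g0 g1 c0 c1 c1' c2 :: "'F::field"
  assumes e1: "B * P * g0 = g1" and e2: "A * R * f0 = f1" and nz: "A \<noteq> 0" "B \<noteq> 0" "f0 \<noteq> 0" "g0 \<noteq> 0" "R \<noteq> 0"
  shows "A * c0 * P - A * c1 - c1' * P + c2 =
    - ((A * f0) / (B * g0)) * (B * (-(g0 / f1) * c2) * R - B * (-(g0 / f0) * c1)
        - (-(g1 / f1) * c1') * R + (-(g1 / f0) * c0))"
proof -
  have f1: "f1 \<noteq> 0" using nz unfolding e2[symmetric] by simp
  have a: "(A * f0) / (B * g0) * (B * (g0 / f1) * c2 * R) = c2"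
    unfolding e2[symmetric] using nz by (simp add: field_simps)
  have b: "(A * f0) / (B * g0) * (B * (g0 / f0) * c1) = A * c1"
    using nz by (simp add: field_simps)
  have c: "(A * f0) / (B * g0) * ((g1 / f1) * c1' * R) = c1' * P"
    unfolding e2[symmetric] e1[symmetric] using nz by (simp add: field_simps)
  have d: "(A * f0) / (B * g0) * ((g1 / f0) * c0) = A * c0 * P"
    unfolding e1[symmetric] using nz by (simp add: field_simps)
  show ?thesis using a b c d by (simp add: algebra_simps)
qed

definition comb :: "(int \<Rightarrow> complex \<Rightarrow> 'F::field) \<Rightarrow> (complex \<Rightarrow> 'F) \<Rightarrow> (complex \<Rightarrow> 'F) \<Rightarrow> int \<Rightarrow> complex \<Rightarrow> 'F" where
  "comb c X X' t u = X u * c t u * X' (u + of_int t) - X u * c (t - 1) u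
     - c (t - 1) (u + 1) * X' (u + of_int t) + c (t - 2) (u + 1)"

lemma coef_wrap: "coef (X # K @ [X']) t u = comb (coef K) X X' t u"
proof -
  have e: "u + 1 + of_int (t - 1) = u + of_int t" by simp
  have "coef (X # (K @ [X'])) t u = X u * coef (K @ [X']) t u - coef (K @ [X']) (t - 1) (u + 1)" by simp
  also have "\<dots> = X u * (coef K t u * X' (u + of_int t) - coef K (t - 1) u)
     - (coef K (t - 1) (u + 1) * X' (u + 1 + of_int (t - 1)) - coef K (t - 1 - 1) (u + 1))"
    by (simp only: coef_snoc)
  also have "\<dots> = comb (coef K) X X' t u" unfolding comb_def e by (simp add: algebra_simps)
  finally show ?thesis by simp
qed

lemma sym_step:
  fixes c :: "int \<Rightarrow> complex \<Rightarrow> 'F::field" and X X' fK fL :: "complex \<Rightarrow> 'F" and s :: int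
  assumes hK: "\<And>j v. c j v = - (fK v / fK (v + of_int (j - (s - 1)))) * c (2*s - 2 - j) (v + of_int (j - (s - 1)))"
  and hL: "\<And>v. fL v = X v * fK v"
  and hp: "\<And>v. X v * X' (v + of_int s) * fK v = fK (v + 1)"
  and nzf: "\<And>v. fK v \<noteq> 0" and nzX: "\<And>v. X v \<noteq> 0"
  shows "comb c X X' t u = - (fL u / fL (u + of_int (t - s))) * comb c X X' (2*s - t) (u + of_int (t - s))"
proof -
  define w where "w = u + of_int (t - s)"
  have h1: "c (2*s - t) w = -(fK w / fK (u+1)) * c (t-2) (u+1)"
  proof -
    have "w + of_int ((2*s - t) - (s - 1)) = u + 1" unfolding w_def by simp
    moreover have "2*s - 2 - (2*s - t) = t - 2" by simp
    ultimately show ?thesis using hK[of "2*s - t" w] by metis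
  qed
  have h2: "c (2*s - t - 1) w = -(fK w / fK u) * c (t-1) u"
  proof -
    have "w + of_int ((2*s - t - 1) - (s - 1)) = u" unfolding w_def by simp
    moreover have "2*s - 2 - (2*s - t - 1) = t - 1" by simp
    ultimately show ?thesis using hK[of "2*s - t - 1" w] by metis
  qed
  have h3: "c (2*s - t - 1) (w + 1) = -(fK (w+1) / fK (u+1)) * c (t-1) (u+1)"
  proof -
    have "w + 1 + of_int ((2*s - t - 1) - (s - 1)) = u + 1" unfolding w_def by simp
    moreover have "2*s - 2 - (2*s - t - 1) = t - 1" by simp
    ultimately show ?thesis using hK[of "2*s - t - 1" "w+1"] by metis
  qed
  have h4: "c (2*s - t - 2) (w + 1) = -(fK (w+1) / fK u) * c t u"
  proof -
    have "w + 1 + of_int ((2*s - t - 2) - (s - 1)) = u" unfolding w_def by simp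
    moreover have "2*s - 2 - (2*s - t - 2) = t" by simp
    ultimately show ?thesis using hK[of "2*s - t - 2" "w+1"] by metis
  qed
  have ws: "w + of_int (2*s - t) = u + of_int s" unfolding w_def by simp
  have p1: "X w * X' (u + of_int t) * fK w = fK (w + 1)"
  proof -
    have "w + of_int s = u + of_int t" unfolding w_def by simp
    then show ?thesis using hp[of w] by simp
  qed
  have p2: "X u * X' (u + of_int s) * fK u = fK (u + 1)" by (rule hp)
  have Rnz: "X' (u + of_int s) \<noteq> 0" using p2 nzf[of "u+1"] by auto
  have "comb c X X' (2*s - t) w = X w * c (2*s - t) w * X' (u + of_int s) - X w * c (2*s - t - 1) w
     - c (2*s - t - 1) (w + 1) * X' (u + of_int s) + c (2*s - t - 2) (w + 1)"
    unfolding comb_def ws by (simp add: algebra_simps)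
  also have "\<dots> = X w * (-(fK w / fK (u+1)) * c (t-2) (u+1)) * X' (u + of_int s)
     - X w * (-(fK w / fK u) * c (t-1) u)
     - (-(fK (w+1) / fK (u+1)) * c (t-1) (u+1)) * X' (u + of_int s)
     + (-(fK (w+1) / fK u) * c t u)" by (simp only: h1 h2 h3 h4)
  finally have R: "comb c X X' (2*s - t) w = \<dots>" .
  show ?thesis unfolding w_def[symmetric] R unfolding hL comb_def
    by (rule alg_sym[OF p1 p2 nzX nzX nzf nzf Rnz])
qed

lemma Qnz:
  fixes Q :: "nat \<Rightarrow> complex \<Rightarrow> 'F::field"
  assumes "alg_indep n Q" "1 \<le> a" "a \<le> n"
  shows "Q a z \<noteq> 0"
proof
  assume h: "Q a z = 0"
  define e :: "nat \<times> complex \<Rightarrow> nat" where "e = (\<lambda>p. if p = (a, z) then 1 else 0)"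
  have sup: "{p. e p \<noteq> 0} = {(a, z)}" unfolding e_def by auto
  have ea: "e (a, z) = 1" unfolding e_def by simp
  have c1: "\<forall>e'\<in>{e}. finite {p. e' p \<noteq> 0} \<and> (\<forall>p. e' p \<noteq> 0 \<longrightarrow> fst p \<in> {1..n})"
    using assms(2,3) by (auto simp: sup e_def)
  have c2: "(\<Sum>e'\<in>{e}. of_int ((\<lambda>_. 1::int) e') * (\<Prod>p\<in>{p. e' p \<noteq> 0}. Q (fst p) (snd p) ^ e' p)) = 0"
  proof -
    have "(\<Prod>p\<in>{p. e p \<noteq> 0}. Q (fst p) (snd p) ^ e p) = 0" by (subst sup) (simp add: ea h)
    moreover have sg: "\<And>G :: _ \<Rightarrow> 'F. (\<Sum>e'\<in>{e}. G e') = G e" by simp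
    ultimately show ?thesis by (simp only: sg of_int_1 mult_1)
  qed
  have imp: "finite {e} \<and> (\<forall>e'\<in>{e}. finite {p. e' p \<noteq> 0} \<and> (\<forall>p. e' p \<noteq> 0 \<longrightarrow> fst p \<in> {1..n}))
     \<and> (\<Sum>e'\<in>{e}. of_int ((\<lambda>_. 1::int) e') * (\<Prod>p\<in>{p. e' p \<noteq> 0}. Q (fst p) (snd p) ^ e' p)) = 0
     \<longrightarrow> (\<forall>e'\<in>{e}. (\<lambda>_. 1::int) e' = 0)"
    by (rule spec[OF spec[OF assms(1)[unfolded alg_indep_def], of "{e}"], of "\<lambda>_. 1::int"])
  have "\<forall>e'\<in>{e}. (\<lambda>_. 1::int) e' = 0"
    using mp[OF imp] c1 c2 by blast
  then show False by simp
qed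


lemma Ynz:
  assumes "alg_indep n Q" "a \<le> n"
  shows "Yf n Q a z \<noteq> 0"
  using Qnz[OF assms(1)] assms(2) unfolding Yf_def by auto

definition Xf :: "nat \<Rightarrow> (nat \<Rightarrow> complex \<Rightarrow> 'F::field) \<Rightarrow> nat \<Rightarrow> complex \<Rightarrow> 'F" where
  "Xf n Q i v = xf n Q i (v + of_nat n + 1 - of_nat i)"

lemma Lop_opf: "Lop n Q g = opf (map (Xf n Q) [1..<2 * n + 3]) g"
proof -
  have "\<And>xs. foldr (Lfactor n Q) xs g = opf (map (Xf n Q) xs) g"
  proof -
    fix xs show "foldr (Lfactor n Q) xs g = opf (map (Xf n Q) xs) g"
      by (induction xs) (auto simp: opf_def Lfactor_def Xf_def fun_eq_iff)
  qed
  then show ?thesis unfolding Lop_def by simp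
qed

definition Kl :: "nat \<Rightarrow> (nat \<Rightarrow> complex \<Rightarrow> 'F::field) \<Rightarrow> nat \<Rightarrow> (complex \<Rightarrow> 'F) list" where
  "Kl n Q a = map (Xf n Q) [a + 1..<2 * n + 3 - a]"

definition phi :: "nat \<Rightarrow> (nat \<Rightarrow> complex \<Rightarrow> 'F::field) \<Rightarrow> nat \<Rightarrow> complex \<Rightarrow> 'F" where
  "phi n Q a v = 1 / Yf n Q a (v + of_nat n + 1 - of_nat a / 2)"

definition Ssym :: "nat \<Rightarrow> (nat \<Rightarrow> complex \<Rightarrow> 'F::field) \<Rightarrow> nat \<Rightarrow> bool" where
  "Ssym n Q a \<longleftrightarrow> (\<forall>j v. coef (Kl n Q a) j v =
     - (phi n Q a v / phi n Q a (v + of_int (j - int (n + 1 - a))))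
       * coef (Kl n Q a) (2 * int (n + 1 - a) - j) (v + of_int (j - int (n + 1 - a))))"

lemma Kl_step:
  assumes "1 \<le> a" "a \<le> n"
  shows "Kl n Q (a - 1) = Xf n Q a # Kl n Q a @ [Xf n Q (2 * n + 3 - a)]"
proof -
  have "[a - 1 + 1..<2 * n + 3 - (a - 1)] = a # [a + 1..<2 * n + 3 - a] @ [2 * n + 3 - a]"
  proof -
    have e1: "2 * n + 3 - (a - 1) = Suc (2 * n + 3 - a)" using assms by simp
    have "[a..<Suc (2 * n + 3 - a)] = [a..<2 * n + 3 - a] @ [2 * n + 3 - a]"
      using assms by simp
    moreover have "[a..<2 * n + 3 - a] = a # [a + 1..<2 * n + 3 - a]"
      using assms by (simp add: upt_conv_Cons)
    ultimately show ?thesis using assms e1 by simp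
  qed
  then show ?thesis unfolding Kl_def by simp
qed

lemma Yf_0[simp]: "Yf n Q 0 z = 1" by (simp add: Yf_def)

lemma phi_nz:
  fixes Q :: "nat \<Rightarrow> complex \<Rightarrow> 'F::field"
  assumes "alg_indep n Q" "a \<le> n" shows "phi n Q a v \<noteq> 0"
  using Ynz[OF assms] unfolding phi_def by simp

lemma xmid_id:
  fixes Q :: "nat \<Rightarrow> complex \<Rightarrow> 'F::field"
  assumes ai: "alg_indep n Q" and n1: "1 \<le> n"
  shows "xmid n Q v * xmid n Q (v - 1) = phi n Q n v / phi n Q n (v - 1)"
proof -
  define q where "q = (\<lambda>k::complex. Q n (v + of_nat n / 2 + k))"
  have qnz: "\<And>k. q k \<noteq> 0" unfolding q_def using Qnz[OF ai n1] by simp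
  have e1: "Q n (v + of_nat n / 2) = q 0" unfolding q_def by simp
  have e2: "Q n (v + (of_nat n + 4) / 2) = q 2" unfolding q_def by (rule arg_cong[where f="Q n"]) (simp add: field_simps)
  have e3: "Q n (v + (of_nat n + 2) / 2) = q 1" unfolding q_def by (rule arg_cong[where f="Q n"]) (simp add: field_simps)
  have e4: "Q n (v - 1 + of_nat n / 2) = q (-1)" unfolding q_def by (rule arg_cong[where f="Q n"]) (simp add: field_simps)
  have e5: "Q n (v - 1 + (of_nat n + 4) / 2) = q 1" unfolding q_def by (rule arg_cong[where f="Q n"]) (simp add: field_simps)
  have e6: "Q n (v - 1 + (of_nat n + 2) / 2) = q 0" unfolding q_def by (rule arg_cong[where f="Q n"]) (simp add: field_simps)
  have p1: "phi n Q n v = q 2 / q 0"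
  proof -
    have "Q n (v + of_nat n + 1 - of_nat n / 2 - dd n n / 2) = q 0" unfolding q_def dd_def
      by (rule arg_cong[where f="Q n"]) (simp add: field_simps)
    moreover have "Q n (v + of_nat n + 1 - of_nat n / 2 + dd n n / 2) = q 2" unfolding q_def dd_def
      by (rule arg_cong[where f="Q n"]) (simp add: field_simps)
    ultimately show ?thesis unfolding phi_def Yf_def using n1 by simp
  qed
  have p2: "phi n Q n (v - 1) = q 1 / q (-1)"
  proof -
    have "Q n (v - 1 + of_nat n + 1 - of_nat n / 2 - dd n n / 2) = q (-1)" unfolding q_def dd_def
      by (rule arg_cong[where f="Q n"]) (simp add: field_simps)
    moreover have "Q n (v - 1 + of_nat n + 1 - of_nat n / 2 + dd n n / 2) = q 1" unfolding q_def dd_def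
      by (rule arg_cong[where f="Q n"]) (simp add: field_simps)
    ultimately show ?thesis unfolding phi_def Yf_def using n1 by simp
  qed
  show ?thesis unfolding p1 p2 xmid_def e1 e2 e3 e4 e5 e6 using qnz
    by (simp add: field_simps power2_eq_square)
qed

lemma Ssym_base:
  fixes Q :: "nat \<Rightarrow> complex \<Rightarrow> 'F::field"
  assumes ai: "alg_indep n Q" and n1: "1 \<le> n"
  shows "Ssym n Q n"
proof -
  have ul: "[n + 1..<2 * n + 3 - n] = [n + 1, n + 2]"
    by (simp add: upt_rec)
  have X1: "Xf n Q (n + 1) = xmid n Q" unfolding Xf_def xf_def by (auto simp: fun_eq_iff)
  have X2: "Xf n Q (n + 2) = (\<lambda>v. - xmid n Q (v - 1))" unfolding Xf_def xf_def
    by (auto simp: fun_eq_iff algebra_simps)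
  have K: "Kl n Q n = [xmid n Q, (\<lambda>v. - xmid n Q (v - 1))]"
    unfolding Kl_def ul using X1 X2 by simp
  let ?c = "coef [xmid n Q, (\<lambda>v. - xmid n Q (v - 1))]"
  have cf: "?c j v = (if j = 0 then - xmid n Q v * xmid n Q (v - 1) else if j = 2 then 1 else 0)" for j v
    by auto
  have pn: "\<And>v. phi n Q n v \<noteq> 0" using phi_nz[OF ai] by simp
  show ?thesis unfolding Ssym_def K
  proof (intro allI)
    fix j v
    have s1: "int (n + 1 - n) = 1" by simp
    show "?c j v = - (phi n Q n v / phi n Q n (v + of_int (j - int (n + 1 - n)))) *
         ?c (2 * int (n + 1 - n) - j) (v + of_int (j - int (n + 1 - n)))"
    proof -
      consider "j = 0" | "j = 2" | "j \<noteq> 0 \<and> j \<noteq> 2" by blast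
      then show ?thesis
      proof cases
        case 1
        then show ?thesis unfolding s1 cf using xmid_id[OF ai n1, of v] pn by simp
      next
        case 2
        have e: "v + 1 - 1 = v" by simp
        have "xmid n Q (v + 1) * xmid n Q v = phi n Q n (v + 1) / phi n Q n v"
          using xmid_id[OF ai n1, of "v + 1"] unfolding e .
        then show ?thesis unfolding s1 cf using 2 pn[of v] pn[of "v+1"] by (simp add: field_simps)
      next
        case 3
        then show ?thesis unfolding s1 cf by simp
      qed
    qed
  qed
qed

lemma Ssym_step:
  fixes Q :: "nat \<Rightarrow> complex \<Rightarrow> 'F::field"
  assumes ai: "alg_indep n Q" and a1: "1 \<le> a" and an: "a \<le> n" and IH: "Ssym n Q a"
  shows "Ssym n Q (a - 1)"
proof -
  define s where "s = int (n + 2 - a)"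
  have sK: "int (n + 1 - a) = s - 1" unfolding s_def using an by simp
  have sL: "int (n + 1 - (a - 1)) = s" unfolding s_def using an a1 by simp
  have hK: "\<And>j v. coef (Kl n Q a) j v = - (phi n Q a v / phi n Q a (v + of_int (j - (s - 1))))
      * coef (Kl n Q a) (2*s - 2 - j) (v + of_int (j - (s - 1)))"
  proof -
    fix j v
    have "2 * int (n + 1 - a) - j = 2*s - 2 - j" using sK by simp
    then show "?thesis j v" using IH unfolding Ssym_def sK by metis
  qed
  have ca: "(of_nat (a - 1) :: complex) = of_nat a - 1" using a1 by (simp add: of_nat_diff)
  have cb: "(of_nat (2 * n + 3 - a) :: complex) = 2 * of_nat n + 3 - of_nat a" using an by (simp add: of_nat_diff)
  have cs: "(of_int s :: complex) = of_nat n + 2 - of_nat a" unfolding s_def using an by (simp add: of_nat_diff)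
  define Y where "Y = Yf n Q"
  have Ynz': "\<And>b z. b \<le> n \<Longrightarrow> Y b z \<noteq> 0" unfolding Y_def using Ynz[OF ai] by blast
  have Xa: "Xf n Q a v = Y a (v + of_nat n + 1 - of_nat a / 2) / Y (a - 1) (v + of_nat n + 1 - of_nat a / 2 + 1/2)" for v
  proof -
    have "Xf n Q a v = zf n Q a (v + of_nat n + 1 - of_nat a)" unfolding Xf_def xf_def using a1 an by simp
    also have "\<dots> = Y a (v + of_nat n + 1 - of_nat a / 2) / Y (a - 1) (v + of_nat n + 1 - of_nat a / 2 + 1/2)"
      unfolding zf_def Y_def
      by (intro arg_cong2[where f="(/)"] arg_cong[where f="Yf n Q _"]) (simp_all add: field_simps)
    finally show ?thesis .
  qed
  have Xb: "Xf n Q (2 * n + 3 - a) (v + of_int s) = Y (a - 1) (v + of_nat n + 1 - of_nat a / 2 + 1/2) / Y a (v + of_nat n + 1 - of_nat a / 2 + 1)" for v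
  proof -
    have br: "\<not> (1 \<le> 2 * n + 3 - a \<and> 2 * n + 3 - a \<le> n)" "2 * n + 3 - a \<noteq> n + 1" "2 * n + 3 - a \<noteq> n + 2"
       "n + 3 \<le> 2 * n + 3 - a \<and> 2 * n + 3 - a \<le> 2 * n + 2" using a1 an by auto
    have aa: "2 * n + 3 - (2 * n + 3 - a) = a" using an by simp
    have "Xf n Q (2 * n + 3 - a) (v + of_int s) = zbarf n Q a (v + of_int s + of_nat n + 1 - of_nat (2 * n + 3 - a))"
      unfolding Xf_def xf_def using br aa by simp
    also have "\<dots> = Y (a - 1) (v + of_nat n + 1 - of_nat a / 2 + 1/2) / Y a (v + of_nat n + 1 - of_nat a / 2 + 1)"
      unfolding zbarf_def Y_def cb cs
      by (intro arg_cong2[where f="(/)"] arg_cong[where f="Yf n Q _"]) (simp_all add: field_simps)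
    finally show ?thesis .
  qed
  have pa: "phi n Q a v = 1 / Y a (v + of_nat n + 1 - of_nat a / 2)" for v unfolding phi_def Y_def ..
  have pa1: "phi n Q a (v + 1) = 1 / Y a (v + of_nat n + 1 - of_nat a / 2 + 1)" for v
    unfolding phi_def Y_def by (rule arg_cong[where f="\<lambda>x. 1 / Yf n Q a x"]) (simp add: field_simps)
  have pb: "phi n Q (a - 1) v = 1 / Y (a - 1) (v + of_nat n + 1 - of_nat a / 2 + 1/2)" for v
    unfolding phi_def Y_def ca by (rule arg_cong[where f="\<lambda>x. 1 / Yf n Q (a - 1) x"]) (simp add: field_simps)
  have hL: "\<And>v. phi n Q (a - 1) v = Xf n Q a v * phi n Q a v"
  proof -
    fix v
    show "phi n Q (a - 1) v = Xf n Q a v * phi n Q a v"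
      unfolding pb Xa pa using Ynz'[OF an] Ynz'[of "a - 1"] an by (simp add: field_simps)
  qed
  have hp: "\<And>v. Xf n Q a v * Xf n Q (2 * n + 3 - a) (v + of_int s) * phi n Q a v = phi n Q a (v + 1)"
  proof -
    fix v
    show "Xf n Q a v * Xf n Q (2 * n + 3 - a) (v + of_int s) * phi n Q a v = phi n Q a (v + 1)"
      unfolding pa1 Xa Xb pa using Ynz'[OF an] Ynz'[of "a - 1"] an by (simp add: field_simps)
  qed
  have nzf: "\<And>v. phi n Q a v \<noteq> 0" using phi_nz[OF ai an] by simp
  have nzX: "\<And>v. Xf n Q a v \<noteq> 0"
    unfolding Xa using Ynz'[OF an] Ynz'[of "a - 1"] an by simp
  show ?thesis unfolding Ssym_def sL Kl_step[OF a1 an] coef_wrap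
  proof (intro allI)
    fix j v
    show "comb (coef (Kl n Q a)) (Xf n Q a) (Xf n Q (2 * n + 3 - a)) j v =
         - (phi n Q (a - 1) v / phi n Q (a - 1) (v + of_int (j - s))) *
         comb (coef (Kl n Q a)) (Xf n Q a) (Xf n Q (2 * n + 3 - a)) (2 * s - j) (v + of_int (j - s))"
      by (rule sym_step[OF hK hL hp nzf nzX])
  qed
qed

lemma Ssym_all:
  fixes Q :: "nat \<Rightarrow> complex \<Rightarrow> 'F::field"
  assumes ai: "alg_indep n Q" and n1: "1 \<le> n"
  shows "d \<le> n \<Longrightarrow> Ssym n Q (n - d)"
proof (induction d)
  case 0 then show ?case using Ssym_base[OF ai n1] by (simp only: diff_zero)
next
  case (Suc d)
  have dn: "d \<le> n" "1 \<le> n - d" "n - d \<le> n" using Suc.prems by auto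
  have "Ssym n Q (n - d)" by (rule Suc.IH[OF dn(1)])
  then have "Ssym n Q (n - d - 1)" by (rule Ssym_step[OF ai dn(2) dn(3)])
  moreover have "n - d - 1 = n - Suc d" by simp
  ultimately show ?case by (simp only:)
qed

lemma coef_sym:
  fixes Q :: "nat \<Rightarrow> complex \<Rightarrow> 'F::field"
  assumes ai: "alg_indep n Q" and n1: "1 \<le> n"
  shows "coef (Kl n Q 0) j v =
    - coef (Kl n Q 0) (2 * int (n + 1) - j) (v + of_int (j - int (n + 1)))"
proof -
  have "Ssym n Q 0" using Ssym_all[OF ai n1, of n] by simp
  then have H: "coef (Kl n Q 0) j v = - (phi n Q 0 v / phi n Q 0 (v + of_int (j - int (n + 1 - 0))))
       * coef (Kl n Q 0) (2 * int (n + 1 - 0) - j) (v + of_int (j - int (n + 1 - 0)))"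
    unfolding Ssym_def by blast
  have p0: "\<And>x. phi n Q 0 x = 1" by (simp add: phi_def)
  have n0: "n + 1 - 0 = n + 1" by simp
  show ?thesis using H unfolding p0 n0 by simp
qed

definition Zm :: "(nat \<Rightarrow> complex \<Rightarrow> 'F::field) \<Rightarrow> nat \<Rightarrow> nat \<Rightarrow> nat \<Rightarrow> complex \<Rightarrow> nat \<Rightarrow> 'F mat" where
  "Zm w N a m u j = mat (N + j) (N + j) (\<lambda>(r, c). if r < N then w (r + 1) (u + of_nat (if c < a + j then c else c + (m - j)))
      else (if c = a + (r - N) then 1 else 0))"

lemma Zm_carrier: "Zm w N a m u j \<in> carrier_mat (N + j) (N + j)" unfolding Zm_def by simp

lemma Zm_step:
  assumes jm: "j < m" and aN: "a \<le> N"
  shows "det (Zm w N a m u (Suc j)) = (-1) ^ (N + a) * det (Zm w N a m u j)"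
proof -
  let ?A = "Zm w N a m u (Suc j)"
  have A: "?A \<in> carrier_mat (N + Suc j) (N + Suc j)" by (rule Zm_carrier)
  have i: "N + j < N + Suc j" by simp
  have "det ?A = (\<Sum>c<N + Suc j. ?A $$ (N + j, c) * cofactor ?A (N + j) c)"
    by (rule laplace_expansion_row[OF A i])
  also have "\<dots> = (\<Sum>c<N + Suc j. (if c = a + j then cofactor ?A (N + j) c else 0))"
    by (rule sum.cong) (auto simp: Zm_def)
  also have "\<dots> = cofactor ?A (N + j) (a + j)" using aN by simp
  also have "\<dots> = (-1) ^ (N + j + (a + j)) * det (mat_delete ?A (N + j) (a + j))"
    unfolding cofactor_def ..
  also have "mat_delete ?A (N + j) (a + j) = Zm w N a m u j"
  proof (rule eq_matI)
    fix r c assume r: "r < dim_row (Zm w N a m u j)" and c: "c < dim_col (Zm w N a m u j)"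
    then have r': "r < N + j" and c': "c < N + j" unfolding Zm_def by auto
    show "mat_delete ?A (N + j) (a + j) $$ (r, c) = Zm w N a m u j $$ (r, c)"
      unfolding mat_delete_def using r' c' jm by (auto simp: Zm_def algebra_simps)
  qed (auto simp: Zm_def mat_delete_def)
  also have "(-1 :: 'a) ^ (N + j + (a + j)) = (-1) ^ (N + a)"
  proof -
    have "N + j + (a + j) = (N + a) + 2 * j" by simp
    then show ?thesis by (simp add: power_add power_mult)
  qed
  finally show ?thesis .
qed

lemma Zm_iter:
  assumes aN: "a \<le> N"
  shows "j \<le> m \<Longrightarrow> det (Zm w N a m u j) = ((-1) ^ (N + a)) ^ j * det (Zm w N a m u 0)"
proof (induction j)
  case 0 then show ?case by simp
next
  case (Suc j)
  then show ?case using Zm_step[OF _ aN, of j m w u] by simp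
qed

lemma Zm_0: "det (Zm w N a m u 0) = xi_am w N a m u"
proof -
  have "Zm w N a m u 0 = mat N N (\<lambda>(r, s). w (r + 1) (u + of_int (if s < a then int s else int (s + m))))"
    by (rule eq_matI) (auto simp: Zm_def)
  then show ?thesis unfolding xi_am_def casorati_def by simp
qed

lemma mat_mult_entry:
  "i < nr \<Longrightarrow> j < nc \<Longrightarrow> (mat nr n f * mat n nc g) $$ (i, j) = (\<Sum>p<n. f (i, p) * g (p, j))"
  by (simp add: scalar_prod_def lessThan_atLeast0)

definition Pm :: "(complex \<Rightarrow> 'F::field) list \<Rightarrow> nat \<Rightarrow> nat \<Rightarrow> complex \<Rightarrow> 'F mat" where
  "Pm L N m u = mat (N + m) (N + m) (\<lambda>(p, c). if c < N then (if p = c then 1 else 0)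
      else coef L (int p - int (c - N)) (u + of_nat (c - N)))"

lemma Pm_det:
  assumes len: "length L = N" and ev: "even N"
  shows "det (Pm L N m u) = 1"
proof -
  have ut: "upper_triangular (Pm L N m u)"
    unfolding upper_triangular_def
  proof (intro allI impI)
    fix i j assume i: "i < dim_row (Pm L N m u)" and ji: "j < i"
    then have i': "i < N + m" unfolding Pm_def by simp
    show "Pm L N m u $$ (i, j) = 0"
    proof (cases "j < N")
      case True then show ?thesis using i' ji unfolding Pm_def by simp
    next
      case False
      then have "coef L (int i - int (j - N)) (u + of_nat (j - N)) = 0"
        using ji len by (intro coef_out) auto
      then show ?thesis using i' ji False unfolding Pm_def by simp
    qed
  qed
  have dg: "diag_mat (Pm L N m u) = replicate (N + m) 1"
  proof (rule nth_equalityI)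
    show "length (diag_mat (Pm L N m u)) = length (replicate (N + m) 1)"
      unfolding diag_mat_def Pm_def by simp
  next
    fix i assume "i < length (diag_mat (Pm L N m u))"
    then have i: "i < N + m" unfolding diag_mat_def Pm_def by simp
    have "coef L (int i - int (i - N)) (u + of_nat (i - N)) = 1" if "\<not> i < N"
    proof -
      have "int i - int (i - N) = int (length L)" using that len by simp
      then show ?thesis using coef_top[of L] ev len by simp
    qed
    then show "diag_mat (Pm L N m u) ! i = replicate (N + m) 1 ! i"
      unfolding diag_mat_def Pm_def using i by auto
  qed
  have C: "Pm L N m u \<in> carrier_mat (N + m) (N + m)" unfolding Pm_def by simp
  show ?thesis using det_upper_triangular[OF ut C] dg by simp
qed

lemma sum_window:
  fixes g :: "complex \<Rightarrow> 'F::field"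
  assumes len: "length L = N" and k: "k < m"
  shows "(\<Sum>p<N + m. g (u + of_nat p) * coef L (int p - int k) (u + of_nat k)) = opf L g (u + of_nat k)"
proof -
  let ?F = "\<lambda>p. g (u + of_nat p) * coef L (int p - int k) (u + of_nat k)"
  have "(\<Sum>p<N + m. ?F p) = (\<Sum>p\<in>{k..N + k}. ?F p)"
  proof (rule sum.mono_neutral_right)
    show "{k..N + k} \<subseteq> {..<N + m}" using k by auto
    show "\<forall>p\<in>{..<N + m} - {k..N + k}. ?F p = 0"
    proof
      fix p assume "p \<in> {..<N + m} - {k..N + k}"
      then have "int p - int k < 0 \<or> int p - int k > int (length L)" using len by auto
      then show "?F p = 0" by (simp add: coef_out)
    qed
  qed simp
  also have "\<dots> = (\<Sum>t\<in>{0..N}. ?F (t + k))"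
    using sum.shift_bounds_cl_nat_ivl[of ?F 0 k N] by simp
  also have "\<dots> = (\<Sum>t\<le>length L. coef L (int t) (u + of_nat k) * g (u + of_nat k + of_nat t))"
    unfolding len atLeast0AtMost by (rule sum.cong) (simp_all add: algebra_simps)
  also have "\<dots> = opf L g (u + of_nat k)" by (rule opf_expand[symmetric])
  finally show ?thesis .
qed

lemma Zm_top:
  assumes len: "length L = N" and ev: "even N" and aN: "a \<le> N"
    and sol: "\<And>r v. r < N \<Longrightarrow> opf L (w (r + 1)) v = 0"
  shows "det (Zm w N a m u m) = xi0 w N u * det (mat m m (\<lambda>(i, k). coef L (int a + int i - int k) (u + of_nat k)))"
proof -
  define A1 where "A1 = mat N N (\<lambda>(r, c). w (r + 1) (u + of_nat c))"
  define A3 where "A3 = mat m N (\<lambda>(i, c). if c = a + i then (1::'a) else 0)"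
  define A4 where "A4 = mat m m (\<lambda>(i, k). coef L (int a + int i - int k) (u + of_nat k))"
  have Zm': "Zm w N a m u m = mat (N + m) (N + m) (\<lambda>(r, c). if r < N then w (r + 1) (u + of_nat c)
      else (if c = a + (r - N) then 1 else 0))"
    unfolding Zm_def by (rule eq_matI) auto
  have prod: "Zm w N a m u m * Pm L N m u = four_block_mat A1 (0\<^sub>m N m) A3 A4"
  proof (rule eq_matI)
    fix r c assume "r < dim_row (four_block_mat A1 (0\<^sub>m N m) A3 A4)" "c < dim_col (four_block_mat A1 (0\<^sub>m N m) A3 A4)"
    then have r: "r < N + m" and c: "c < N + m" unfolding A1_def A4_def by auto
    have e: "(Zm w N a m u m * Pm L N m u) $$ (r, c) =
      (\<Sum>p<N + m. (if r < N then w (r + 1) (u + of_nat p) else (if p = a + (r - N) then 1 else 0)) *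
        (if c < N then (if p = c then 1 else 0) else coef L (int p - int (c - N)) (u + of_nat (c - N))))"
      unfolding Zm' Pm_def by (subst mat_mult_entry[OF r c]) simp
    show "(Zm w N a m u m * Pm L N m u) $$ (r, c) = four_block_mat A1 (0\<^sub>m N m) A3 A4 $$ (r, c)"
    proof (cases "r < N")
      case rN: True
      show ?thesis
      proof (cases "c < N")
        case True
        have "(Zm w N a m u m * Pm L N m u) $$ (r, c) = (\<Sum>p<N + m. (if p = c then w (r + 1) (u + of_nat c) else 0))"
          unfolding e using rN True by (intro sum.cong) auto
        also have "\<dots> = w (r + 1) (u + of_nat c)" using c by simp
        finally show ?thesis using rN True unfolding A1_def A4_def by simp
      next
        case False
        have "(Zm w N a m u m * Pm L N m u) $$ (r, c) = (\<Sum>p<N + m. w (r + 1) (u + of_nat p) * coef L (int p - int (c - N)) (u + of_nat (c - N)))"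
          unfolding e using rN False by simp
        also have "\<dots> = opf L (w (r + 1)) (u + of_nat (c - N))"
          by (rule sum_window[OF len]) (use c False in simp)
        also have "\<dots> = 0" using sol rN by simp
        finally show ?thesis using rN False c unfolding A1_def A4_def by simp
      qed
    next
      case rN: False
      have ai: "a + (r - N) < N + m" using aN r rN by simp
      have "(Zm w N a m u m * Pm L N m u) $$ (r, c) = (\<Sum>p<N + m. (if p = a + (r - N) then
          (if c < N then (if p = c then 1 else 0) else coef L (int p - int (c - N)) (u + of_nat (c - N))) else 0))"
        unfolding e using rN by (intro sum.cong) auto
      also have "\<dots> = (if c < N then (if a + (r - N) = c then 1 else 0) else coef L (int (a + (r - N)) - int (c - N)) (u + of_nat (c - N)))"
        using ai by simp
      finally show ?thesis using rN r c unfolding A1_def A3_def A4_def by (auto simp: algebra_simps)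
    qed
  qed (auto simp: A1_def A4_def Zm_def Pm_def)
  have "det (Zm w N a m u m * Pm L N m u) = det (Zm w N a m u m) * det (Pm L N m u)"
    by (rule det_mult[OF Zm_carrier]) (simp add: Pm_def)
  then have "det (Zm w N a m u m) = det (four_block_mat A1 (0\<^sub>m N m) A3 A4)"
    using prod Pm_det[OF len ev] by simp
  also have "\<dots> = det A1 * det A4"
    by (rule det_four_block_mat_upper_right_zero) (auto simp: A1_def A3_def A4_def)
  also have "det A1 = xi0 w N u" unfolding A1_def xi0_def casorati_def by simp
  finally show ?thesis unfolding A4_def .
qed

lemma casorati_gap:
  assumes len: "length L = N" and ev: "even N" and aN: "a \<le> N"
    and sol: "\<And>r v. r < N \<Longrightarrow> opf L (w (r + 1)) v = 0"
  shows "xi_am w N a m u = (-1) ^ (a * m) * xi0 w N u * det (mat m m (\<lambda>(i, k). coef L (int a + int i - int k) (u + of_nat k)))"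
proof -
  have "det (Zm w N a m u m) = ((-1) ^ (N + a)) ^ m * xi_am w N a m u"
    using Zm_iter[OF aN, of m m w u] Zm_0 by simp
  moreover have "((-1 :: 'a) ^ (N + a)) ^ m = (-1) ^ (a * m)"
    using ev by (simp add: power_add power_mult[symmetric] mult.commute)
  ultimately have "xi_am w N a m u = (-1) ^ (a * m) * det (Zm w N a m u m)"
    by (simp add: power_mult[symmetric] power_add[symmetric] mult.assoc[symmetric] flip: power_mult_distrib)
  then show ?thesis using Zm_top[OF len ev aN, of w m u] sol by simp
qed

lemma neg1_powi: "((-1::'a::field) powi k) = (if even k then 1 else -1)"
  by (simp add: power_int_minus_left)

context
  fixes n :: nat and Q :: "nat \<Rightarrow> complex \<Rightarrow> 'F::field" and w :: "nat \<Rightarrow> complex \<Rightarrow> 'F"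
  assumes ai: "alg_indep n Q" and n1: "1 \<le> n"
    and sol0: "\<forall>m\<in>{1..2 * n + 2}. \<forall>u. Lop n Q (w m) u = 0"
begin

abbreviation "LL \<equiv> Kl n Q 0"

lemma LL_len: "length LL = 2 * n + 2" by (simp add: Kl_def)

lemma LL_sol: "r < 2 * n + 2 \<Longrightarrow> opf LL (w (r + 1)) v = 0"
proof -
  assume r: "r < 2 * n + 2"
  have "LL = map (Xf n Q) [1..<2 * n + 3]" by (simp add: Kl_def)
  then have "opf LL (w (r + 1)) v = Lop n Q (w (r + 1)) v" by (simp only: Lop_opf)
  also have "\<dots> = 0" using sol0 r by auto
  finally show ?thesis .
qed

lemma gap: assumes aN: "a \<le> 2 * n + 2" shows "xi_am w (2 * n + 2) a m u =
   (-1) ^ (a * m) * xi0 w (2 * n + 2) u * det (mat m m (\<lambda>(i, k). coef LL (int a + int i - int k) (u + of_nat k)))"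
  apply (rule casorati_gap[OF LL_len _ aN])
   apply simp
  apply (erule LL_sol)
  done

lemma c0: "coef LL 0 v = -1"
proof -
  have "coef LL 0 v = - coef LL (2 * int (n + 1) - 0) (v + of_int (0 - int (n + 1)))"
    by (rule coef_sym[OF ai n1])
  also have "2 * int (n + 1) - 0 = int (length LL)" unfolding LL_len by simp
  finally show ?thesis using coef_top[of LL] LL_len by simp
qed

lemma xi_shift1: "xi0 w (2 * n + 2) (u + 1) = - xi0 w (2 * n + 2) u"
proof -
  have "xi_am w (2 * n + 2) 0 1 u = xi0 w (2 * n + 2) u * det (mat 1 1 (\<lambda>(i, k). coef LL (int 0 + int i - int k) (u + of_nat k)))"
    using gap[of 0 1 u] by simp
  also have "det (mat 1 1 (\<lambda>(i, k). coef LL (int 0 + int i - int k) (u + of_nat k))) = -1"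
    by (subst det_single) (auto simp: c0)
  also have "xi_am w (2 * n + 2) 0 1 u = xi0 w (2 * n + 2) (u + 1)"
    unfolding xi_am_def xi0_def casorati_def
    by (rule arg_cong[where f=det]) (rule eq_matI, auto simp: algebra_simps)
  finally show ?thesis by simp
qed

lemma xi_shift_nat: "xi0 w (2 * n + 2) (u + of_nat k) = (-1) ^ k * xi0 w (2 * n + 2) u"
proof (induction k arbitrary: u)
  case 0 then show ?case by simp
next
  case (Suc k)
  have e: "xi0 w (2 * n + 2) (u + of_nat (Suc k)) = xi0 w (2 * n + 2) ((u + of_nat k) + 1)"
    by (rule arg_cong[where f="xi0 w (2 * n + 2)"]) simp
  show ?case unfolding e xi_shift1 Suc.IH by simp
qed

lemma xi_shift_int: "xi0 w (2 * n + 2) (u + of_int k) = (-1) ^ nat \<bar>k\<bar> * xi0 w (2 * n + 2) u"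
proof (cases "k \<ge> 0")
  case True
  then have "(of_int k :: complex) = of_nat (nat k)" by simp
  then show ?thesis using xi_shift_nat[of u "nat k"] True by simp
next
  case False
  define j where "j = nat (- k)"
  have k: "(of_int k :: complex) = - of_nat j" unfolding j_def using False by simp
  have "xi0 w (2 * n + 2) u = xi0 w (2 * n + 2) ((u - of_nat j) + of_nat j)" by simp
  also have "\<dots> = (-1) ^ j * xi0 w (2 * n + 2) (u - of_nat j)" by (rule xi_shift_nat)
  finally have h: "xi0 w (2 * n + 2) u = (-1) ^ j * xi0 w (2 * n + 2) (u - of_nat j)" .
  have sq: "(-1::'F) ^ j * (-1) ^ j = 1" by (simp flip: power_mult_distrib)
  have "xi0 w (2 * n + 2) (u - of_nat j) = ((-1) ^ j * (-1) ^ j) * xi0 w (2 * n + 2) (u - of_nat j)"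
    unfolding sq by simp
  also have "\<dots> = (-1) ^ j * xi0 w (2 * n + 2) u" unfolding h by (simp add: mult.assoc)
  finally have "xi0 w (2 * n + 2) (u - of_nat j) = (-1) ^ j * xi0 w (2 * n + 2) u" .
  then show ?thesis unfolding k j_def using False by simp
qed

lemma part2:
  assumes aN: "a \<le> 2 * n + 2"
  shows "xi_am w (2 * n + 2) a m u
     = (-1) powi (int a - int (2 * n + 2) div 2 + int m)
       * xi_am w (2 * n + 2) (2 * n + 2 - a) m (u + of_int (int a - int (2 * n + 2) div 2))"
proof -
  define N where "N = 2 * n + 2"
  define d where "d = int a - int (n + 1)"
  have dN: "int a - int (2 * n + 2) div 2 = d" unfolding d_def by simp
  define u' where "u' = u + of_int d"
  define A where "A = mat m m (\<lambda>(i, k). coef LL (int a + int i - int k) (u + of_nat k))"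
  define B where "B = mat m m (\<lambda>(i, k). coef LL (int (N - a) + int i - int k) (u' + of_nat k))"
  have AB: "A = (-1) \<cdot>\<^sub>m transpose_mat B"
  proof (rule eq_matI)
    fix i k assume "i < dim_row ((-1) \<cdot>\<^sub>m transpose_mat B)" "k < dim_col ((-1) \<cdot>\<^sub>m transpose_mat B)"
    then have i: "i < m" and k: "k < m" unfolding B_def by auto
    have "coef LL (int a + int i - int k) (u + of_nat k) =
      - coef LL (2 * int (n + 1) - (int a + int i - int k)) (u + of_nat k + of_int ((int a + int i - int k) - int (n + 1)))"
      by (rule coef_sym[OF ai n1])
    also have "2 * int (n + 1) - (int a + int i - int k) = int (N - a) + int k - int i"
      unfolding N_def using aN by simp
    also have "u + of_nat k + of_int ((int a + int i - int k) - int (n + 1)) = u' + of_nat i"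
      unfolding u'_def d_def by simp
    finally show "A $$ (i, k) = ((-1) \<cdot>\<^sub>m transpose_mat B) $$ (i, k)"
      unfolding A_def B_def using i k by simp
  qed (auto simp: A_def B_def)
  have detAB: "det A = (-1) ^ m * det B"
    unfolding AB by (simp add: B_def det_transpose[of _ m])
  have L: "xi_am w N a m u = (-1) ^ (a * m) * xi0 w N u * det A"
    unfolding N_def A_def by (rule gap[OF aN])
  have R: "xi_am w N (N - a) m u' = (-1) ^ ((N - a) * m) * xi0 w N u' * det B"
    unfolding N_def B_def by (rule gap) simp
  have S: "xi0 w N u' = (-1) ^ nat \<bar>d\<bar> * xi0 w N u"
    unfolding u'_def N_def by (rule xi_shift_int)
  have p1: "even ((N - a) * m) = even (a * m)" unfolding N_def using aN by auto
  have p2: "even (nat \<bar>d\<bar>) = even d" by (simp add: even_nat_iff)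
  have p3: "even (d + int m) = (even d = even m)" by auto
  have fin: "xi_am w N a m u = (-1) powi (d + int m) * xi_am w N (N - a) m u'"
    unfolding L R S detAB neg1_powi minus_one_power_iff using p1 p2 p3 by auto
  have hdiv: "int (2 * n + 2) div 2 = int (n + 1)" by simp
  show ?thesis unfolding hdiv using fin unfolding u'_def N_def d_def .
qed

end

lemma det_swap_fun:
  fixes G :: "nat \<Rightarrow> nat \<Rightarrow> 'F::field"
  assumes "k < N" "l < N" "k \<noteq> l"
  shows "det (mat N N (\<lambda>(r, c). G r (if c = k then l else if c = l then k else c))) = - det (mat N N (\<lambda>(r, c). G r c))"
proof -
  have "mat N N (\<lambda>(r, c). G r (if c = k then l else if c = l then k else c)) = swapcols k l (mat N N (\<lambda>(r, c). G r c))"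
    using assms by (intro eq_matI) auto
  then show ?thesis using det_swapcols[OF assms, of "mat N N (\<lambda>(r, c). G r c)"] by simp
qed

definition rotl :: "nat \<Rightarrow> nat \<Rightarrow> nat \<Rightarrow> nat" where
  "rotl i j c = (if c < i \<or> j < c then c else if c = j then i else c + 1)"

lemma det_rotl:
  fixes G :: "nat \<Rightarrow> nat \<Rightarrow> 'F::field"
  assumes "i \<le> j" "j < N"
  shows "det (mat N N (\<lambda>(r, c). G r (rotl i j c))) = (-1) ^ (j - i) * det (mat N N (\<lambda>(r, c). G r c))"
  using assms
proof (induction j arbitrary: G)
  case 0
  then have "mat N N (\<lambda>(r, c). G r (rotl i 0 c)) = mat N N (\<lambda>(r, c). G r c)"
    by (intro eq_matI) (auto simp: rotl_def)
  then show ?case using 0 by simp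
next
  case (Suc j)
  show ?case
  proof (cases "i = Suc j")
    case True
    then have "mat N N (\<lambda>(r, c). G r (rotl i (Suc j) c)) = mat N N (\<lambda>(r, c). G r c)"
      by (intro eq_matI) (auto simp: rotl_def)
    then show ?thesis using True by simp
  next
    case False
    then have ij: "i \<le> j" using Suc.prems by simp
    define H where "H = (\<lambda>r c. G r (rotl i j c))"
    have "mat N N (\<lambda>(r, c). G r (rotl i (Suc j) c)) =
       mat N N (\<lambda>(r, c). H r (if c = j then Suc j else if c = Suc j then j else c))"
      unfolding H_def using ij by (intro eq_matI) (auto simp: rotl_def)
    then have "det (mat N N (\<lambda>(r, c). G r (rotl i (Suc j) c))) = - det (mat N N (\<lambda>(r, c). H r c))"
      using det_swap_fun[of j N "Suc j" H] Suc.prems by simp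
    also have "det (mat N N (\<lambda>(r, c). H r c)) = (-1) ^ (j - i) * det (mat N N (\<lambda>(r, c). G r c))"
      unfolding H_def by (rule Suc.IH) (use ij Suc.prems in auto)
    finally show ?thesis using ij by (simp add: Suc_diff_le)
  qed
qed

lemma adj_kill:
  fixes B :: "'F::field mat"
  assumes B: "B \<in> carrier_mat N N" and j: "j < N"
    and kill: "\<And>k. k < N \<Longrightarrow> (\<Sum>i<N. ph i * B $$ (i, k)) = 0"
  shows "det B * ph j = 0"
proof -
  have AA: "B * adj_mat B = det B \<cdot>\<^sub>m 1\<^sub>m N" by (rule adj_mat(2)[OF B])
  have ent: "\<And>i. i < N \<Longrightarrow> (\<Sum>k<N. B $$ (i, k) * adj_mat B $$ (k, j)) = (if i = j then det B else 0)"
  proof -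
    fix i assume i: "i < N"
    have "(B * adj_mat B) $$ (i, j) = (\<Sum>k<N. B $$ (i, k) * adj_mat B $$ (k, j))"
      using B adj_mat(1)[OF B] i j by (simp add: scalar_prod_def lessThan_atLeast0)
    moreover have "(det B \<cdot>\<^sub>m 1\<^sub>m N) $$ (i, j) = (if i = j then det B else 0)" using i j by simp
    ultimately show "?thesis i" unfolding AA by simp
  qed
  have "(\<Sum>i<N. ph i * (if i = j then det B else 0)) = (\<Sum>i<N. if i = j then ph j * det B else 0)"
    by (rule sum.cong) auto
  then have "det B * ph j = (\<Sum>i<N. ph i * (if i = j then det B else 0))" using j by (simp add: mult.commute)
  also have "\<dots> = (\<Sum>i<N. ph i * (\<Sum>k<N. B $$ (i, k) * adj_mat B $$ (k, j)))"
    by (rule sum.cong) (simp_all add: ent)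
  also have "\<dots> = (\<Sum>k<N. (\<Sum>i<N. ph i * B $$ (i, k)) * adj_mat B $$ (k, j))"
    by (simp add: sum_distrib_left sum_distrib_right mult.assoc) (rule sum.swap)
  also have "\<dots> = 0" using kill by simp
  finally show ?thesis .
qed

context
  fixes N a :: nat and Cc :: "nat \<Rightarrow> nat \<Rightarrow> 'F::field"
  assumes a0: "0 < a" and aN: "a < N"
begin

definition Mx :: "(nat \<Rightarrow> 'F) \<Rightarrow> (nat \<Rightarrow> 'F) \<Rightarrow> 'F mat" where
  "Mx x y = mat N N (\<lambda>(r, c). if c = 0 then x r else if c = a then y r else Cc c r)"

definition Br where "Br x y = det (Mx x y)"

definition Kf where "Kf x i = cofactor (Mx x (\<lambda>_. 0)) i a"

lemma Mx_carrier: "Mx x y \<in> carrier_mat N N" unfolding Mx_def by simp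

lemma Br_lin: "Br x y = (\<Sum>i<N. y i * Kf x i)"
proof -
  have "Br x y = (\<Sum>i<N. Mx x y $$ (i, a) * cofactor (Mx x y) i a)"
    unfolding Br_def by (rule laplace_expansion_column[OF Mx_carrier aN])
  also have "\<dots> = (\<Sum>i<N. y i * Kf x i)"
  proof (rule sum.cong)
    fix i assume i: "i \<in> {..<N}"
    have "mat_delete (Mx x y) i a = mat_delete (Mx x (\<lambda>_. 0)) i a"
      unfolding mat_delete_def Mx_def by (rule eq_matI) auto
    moreover have "Mx x y $$ (i, a) = y i" unfolding Mx_def using i a0 aN by simp
    ultimately show "Mx x y $$ (i, a) * cofactor (Mx x y) i a = y i * Kf x i"
      unfolding Kf_def cofactor_def by simp
  qed simp
  finally show ?thesis .
qed

lemma Br_same: "Br x x = 0"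
  unfolding Br_def by (rule det_identical_columns[OF Mx_carrier, of 0 a]) (use a0 aN in \<open>auto simp: Mx_def\<close>)

lemma Br_C: "0 < j \<Longrightarrow> j < N \<Longrightarrow> j \<noteq> a \<Longrightarrow> Br x (Cc j) = 0"
  unfolding Br_def by (rule det_identical_columns[OF Mx_carrier, of j a]) (use a0 aN in \<open>auto simp: Mx_def\<close>)

lemma Br_swap: "Br y x = - Br x y"
proof -
  have "Mx y x = swapcols 0 a (Mx x y)" unfolding Mx_def by (rule eq_matI) (use a0 aN in auto)
  then show ?thesis unfolding Br_def using det_swapcols[OF _ aN _ Mx_carrier, of 0] a0 aN by simp
qed

lemma plucker:
  "Br p r * Br q s - Br p q * Br r s - Br p s * Br q r = 0"
proof -
  define ph where "ph i = Br p r * Kf q i - Br p q * Kf r i - Br q r * Kf p i" for i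
  define f where "f z = Br p r * Br q z - Br p q * Br r z - Br p z * Br q r" for z
  have f_lin: "f z = (\<Sum>i<N. z i * ph i)" for z
    unfolding f_def ph_def Br_lin[of q z] Br_lin[of r z] Br_lin[of p z]
    by (simp add: sum_distrib_left sum_subtractf sum.distrib algebra_simps)
  have fC: "f (Cc j) = 0" if "0 < j" "j < N" "j \<noteq> a" for j
    unfolding f_def using Br_C[OF that] by simp
  have fp: "f p = 0" unfolding f_def using Br_swap[of q p] Br_swap[of r p] Br_same[of p] by (simp add: algebra_simps)
  have fq: "f q = 0" unfolding f_def using Br_swap[of r q] Br_same[of q] by (simp add: algebra_simps)
  have fr: "f r = 0" unfolding f_def using Br_same[of r] by (simp add: algebra_simps)
  have kill: "Br x y * f s = 0" if fx: "f x = 0" and fy: "f y = 0" for x y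
  proof -
    have "\<forall>j<N. det (Mx x y) * ph j = 0"
    proof (intro allI impI)
      fix j assume j: "j < N"
      show "det (Mx x y) * ph j = 0"
      proof (rule adj_kill[OF Mx_carrier j])
        fix k assume k: "k < N"
        have col: "(\<Sum>i<N. ph i * Mx x y $$ (i, k)) = f (\<lambda>i. Mx x y $$ (i, k))"
          unfolding f_lin by (simp add: mult.commute)
        show "(\<Sum>i<N. ph i * Mx x y $$ (i, k)) = 0"
        proof -
          have "f (\<lambda>i. Mx x y $$ (i, k)) = f (\<lambda>i. if k = 0 then x i else if k = a then y i else Cc k i)"
            unfolding f_lin using k by (intro sum.cong) (auto simp: Mx_def)
          also have "\<dots> = 0" using fx fy fC[of k] k a0 by (cases "k = 0"; cases "k = a") auto
          finally show ?thesis using col by simp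
        qed
      qed
    qed
    then show ?thesis unfolding Br_def f_lin by (simp add: sum_distrib_left mult.left_commute sum.neutral)
  qed
  have "f s = 0"
  proof (cases "Br p q = 0 \<and> Br p r = 0 \<and> Br q r = 0")
    case True then show ?thesis unfolding f_def by simp
  next
    case False
    then show ?thesis using kill[OF fp fq] kill[OF fp fr] kill[OF fq fr] by auto
  qed
  then show ?thesis unfolding f_def by simp
qed

end

lemma rotl_lt: "c < i \<Longrightarrow> rotl i j c = c" by (simp add: rotl_def)
lemma rotl_gt: "j < c \<Longrightarrow> rotl i j c = c" by (simp add: rotl_def)
lemma rotl_j: "i \<le> j \<Longrightarrow> rotl i j j = i" by (simp add: rotl_def)
lemma rotl_mid: "i \<le> c \<Longrightarrow> c < j \<Longrightarrow> rotl i j c = c + 1" by (simp add: rotl_def)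

lemma mat_eqI: "(\<And>r c. r < N \<Longrightarrow> c < N \<Longrightarrow> f (r, c) = g (r, c)) \<Longrightarrow> mat N N f = mat N N g"
  by (rule eq_matI) auto

lemma part1:
  fixes w :: "nat \<Rightarrow> complex \<Rightarrow> 'F::field"
  assumes ev: "even N" and a1: "1 \<le> a" and aN: "a + 1 \<le> N" and m1: "1 \<le> m"
  shows "xi_am w N a m u * xi_am w N a m (u + 1)
          - xi_am w N a (m + 1) u * xi_am w N a (m - 1) (u + 1)
          - xi_am w N (a + 1) m u * xi_am w N (a - 1) m (u + 1) = 0"
proof -
  have a0: "0 < a" and aN': "a < N" using a1 aN by auto
  define v where "v k r = w (r + 1) (u + of_nat k)" for k r
  define Cc where "Cc j r = (if j < a then v j r else v (j + m) r)" for j r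
  define G where "G x y r c = (if c = 0 then x r else if c = a then y r else Cc c r)" for x y r c
  have MG: "Mx N a Cc x y = mat N N (\<lambda>(r, c). G x y r c)" for x y unfolding Mx_def[OF a0 aN'] G_def by simp
  let ?p = "v 0" and ?q = "v a" and ?r = "v (a + m)" and ?s = "v (N + m)"
  have xi: "xi_am w N b k z = det (mat N N (\<lambda>(r, c). w (r + 1) (z + of_int (if c < b then int c else int (c + k)))))" for b k z
    unfolding xi_am_def casorati_def ..
  have R1: "det (mat N N (\<lambda>(r, c). G x y r (rotl a (N - 1) c))) = (-1) ^ (N - 1 - a) * Br N a Cc x y" for x y
    unfolding Br_def[OF a0 aN'] MG by (rule det_rotl) (use aN in auto)
  have R2: "det (mat N N (\<lambda>(r, c). G x y r (rotl 0 (a - 1) c))) = (-1) ^ (a - 1) * Br N a Cc x y" for x y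
    unfolding Br_def[OF a0 aN'] MG using det_rotl[of 0 "a - 1" N "G x y"] aN by simp
  have R12: "det (mat N N (\<lambda>(r, c). G x y r (rotl a (N - 1) (rotl 0 (a - 1) c)))) = Br N a Cc x y" for x y
  proof -
    have "det (mat N N (\<lambda>(r, c). (\<lambda>r c. G x y r (rotl a (N - 1) c)) r (rotl 0 (a - 1) c)))
       = (-1) ^ (a - 1 - 0) * det (mat N N (\<lambda>(r, c). (\<lambda>r c. G x y r (rotl a (N - 1) c)) r c))"
      using det_rotl[of 0 "a - 1" N "\<lambda>r c. G x y r (rotl a (N - 1) c)"] aN by simp
    also have "\<dots> = (-1) ^ (a - 1) * ((-1) ^ (N - 1 - a) * Br N a Cc x y)" using R1 by simp
    also have "(-1 :: 'F) ^ (a - 1) * (-1) ^ (N - 1 - a) = 1"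
    proof -
      have "a - 1 + (N - 1 - a) = N - 2" using a1 aN by simp
      moreover have "even (N - 2)" using ev aN by simp
      ultimately show ?thesis by (simp add: power_add[symmetric])
    qed
    then have "(-1 :: 'F) ^ (a - 1) * ((-1) ^ (N - 1 - a) * Br N a Cc x y) = Br N a Cc x y"
      by (simp add: mult.assoc[symmetric])
    finally show ?thesis by simp
  qed
  have A1: "xi_am w N a m u = Br N a Cc ?p ?r"
    unfolding xi Br_def[OF a0 aN'] MG by (rule arg_cong[where f=det], rule mat_eqI) (use a0 in \<open>auto simp: G_def Cc_def v_def\<close>)
  have C1: "xi_am w N (a + 1) m u = Br N a Cc ?p ?q"
    unfolding xi Br_def[OF a0 aN'] MG by (rule arg_cong[where f=det], rule mat_eqI) (use a0 in \<open>auto simp: G_def Cc_def v_def\<close>)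
  have A2: "xi_am w N a m (u + 1) = Br N a Cc ?q ?s"
  proof -
    have "mat N N (\<lambda>(r, c). w (r + 1) (u + 1 + of_int (if c < a then int c else int (c + m))))
      = mat N N (\<lambda>(r, c). G ?q ?s r (rotl a (N - 1) (rotl 0 (a - 1) c)))"
    proof (rule mat_eqI)
      fix r c assume r: "r < N" and c: "c < N"
      consider "c < a - 1" | "c = a - 1" | "a \<le> c \<and> c < N - 1" | "c = N - 1" using c a0 by linarith
      then show "(\<lambda>(r, c). w (r + 1) (u + 1 + of_int (if c < a then int c else int (c + m)))) (r, c)
         = (\<lambda>(r, c). G ?q ?s r (rotl a (N - 1) (rotl 0 (a - 1) c))) (r, c)"
      proof cases
        case 1
        then have "rotl a (N - 1) (rotl 0 (a - 1) c) = c + 1" by (simp add: rotl_mid rotl_lt)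
        moreover have "c + 1 < a" using 1 by simp
        ultimately show ?thesis using 1 by (simp add: G_def Cc_def v_def algebra_simps)
      next
        case 2
        then have "rotl a (N - 1) (rotl 0 (a - 1) c) = 0" using a0 by (simp add: rotl_j rotl_lt)
        then show ?thesis using 2 a0 by (simp add: G_def Cc_def v_def algebra_simps of_nat_diff)
      next
        case 3
        have "rotl 0 (a - 1) c = c" by (rule rotl_gt) (use 3 a0 in linarith)
        moreover have "rotl a (N - 1) c = c + 1" by (rule rotl_mid) (use 3 in auto)
        ultimately have "rotl a (N - 1) (rotl 0 (a - 1) c) = c + 1" by simp
        moreover have "\<not> c < a - 1" "\<not> c < a" using 3 by auto
        ultimately show ?thesis using 3 by (simp add: G_def Cc_def v_def algebra_simps)
      next
        case 4
        have "rotl 0 (a - 1) c = c" by (rule rotl_gt) (use 4 a0 aN in linarith)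
        moreover have "rotl a (N - 1) c = a" using 4 aN by (simp add: rotl_j)
        ultimately have "rotl a (N - 1) (rotl 0 (a - 1) c) = a" by simp
        moreover have "a \<noteq> 0" "\<not> c < a" "\<not> c < a - 1" "(of_nat N :: complex) = of_nat c + 1" using 4 a0 aN by auto
        ultimately show ?thesis by (simp add: G_def Cc_def v_def algebra_simps)
      qed
    qed
    then show ?thesis unfolding xi R12[symmetric] by simp
  qed
  have B1: "xi_am w N a (m + 1) u = (-1) ^ (N - 1 - a) * Br N a Cc ?p ?s"
  proof -
    have "mat N N (\<lambda>(r, c). w (r + 1) (u + of_int (if c < a then int c else int (c + (m + 1)))))
      = mat N N (\<lambda>(r, c). G ?p ?s r (rotl a (N - 1) c))"
    proof (rule mat_eqI)
      fix r c assume r: "r < N" and c: "c < N"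
      consider "c < a" | "a \<le> c \<and> c < N - 1" | "c = N - 1" using c a0 by linarith
      then show "(\<lambda>(r, c). w (r + 1) (u + of_int (if c < a then int c else int (c + (m + 1))))) (r, c)
         = (\<lambda>(r, c). G ?p ?s r (rotl a (N - 1) c)) (r, c)"
      proof cases
        case 1
        then have "rotl a (N - 1) c = c" by (simp add: rotl_lt)
        then show ?thesis using 1 by (simp add: G_def Cc_def v_def algebra_simps)
      next
        case 2
        then have "rotl a (N - 1) c = c + 1" by (simp add: rotl_mid)
        then show ?thesis using 2 by (simp add: G_def Cc_def v_def algebra_simps)
      next
        case 3
        then have "rotl a (N - 1) c = a" using aN by (simp add: rotl_j)
        moreover have "a \<noteq> 0" "\<not> c < a" "(of_nat N :: complex) = of_nat c + 1" using 3 a0 aN by auto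
        ultimately show ?thesis by (simp add: G_def Cc_def v_def algebra_simps)
      qed
    qed
    then show ?thesis unfolding xi R1[symmetric] by simp
  qed
  have B2: "xi_am w N a (m - 1) (u + 1) = (-1) ^ (a - 1) * Br N a Cc ?q ?r"
  proof -
    have "mat N N (\<lambda>(r, c). w (r + 1) (u + 1 + of_int (if c < a then int c else int (c + (m - 1)))))
      = mat N N (\<lambda>(r, c). G ?q ?r r (rotl 0 (a - 1) c))"
    proof (rule mat_eqI)
      fix r c assume r: "r < N" and c: "c < N"
      consider "c < a - 1" | "c = a - 1" | "a \<le> c" using c a0 by linarith
      then show "(\<lambda>(r, c). w (r + 1) (u + 1 + of_int (if c < a then int c else int (c + (m - 1))))) (r, c)
         = (\<lambda>(r, c). G ?q ?r r (rotl 0 (a - 1) c)) (r, c)"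
      proof cases
        case 1
        then have "rotl 0 (a - 1) c = c + 1" by (simp add: rotl_mid)
        moreover have "c + 1 < a" using 1 by simp
        ultimately show ?thesis using 1 by (simp add: G_def Cc_def v_def algebra_simps)
      next
        case 2
        then have "rotl 0 (a - 1) c = 0" by (simp add: rotl_j)
        then show ?thesis using 2 a0 by (simp add: G_def Cc_def v_def algebra_simps of_nat_diff)
      next
        case 3
        have "rotl 0 (a - 1) c = c" by (rule rotl_gt) (use 3 a0 in linarith)
        then show ?thesis using 3 a0 m1 by (simp add: G_def Cc_def v_def algebra_simps of_nat_diff)
      qed
    qed
    then show ?thesis unfolding xi R2[symmetric] by simp
  qed
  have C2: "xi_am w N (a - 1) m (u + 1) = Br N a Cc ?r ?s"
  proof -
    have "mat N N (\<lambda>(r, c). w (r + 1) (u + 1 + of_int (if c < a - 1 then int c else int (c + m))))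
      = mat N N (\<lambda>(r, c). G ?r ?s r (rotl a (N - 1) (rotl 0 (a - 1) c)))"
    proof (rule mat_eqI)
      fix r c assume r: "r < N" and c: "c < N"
      consider "c < a - 1" | "c = a - 1" | "a \<le> c \<and> c < N - 1" | "c = N - 1" using c a0 by linarith
      then show "(\<lambda>(r, c). w (r + 1) (u + 1 + of_int (if c < a - 1 then int c else int (c + m)))) (r, c)
         = (\<lambda>(r, c). G ?r ?s r (rotl a (N - 1) (rotl 0 (a - 1) c))) (r, c)"
      proof cases
        case 1
        then have "rotl a (N - 1) (rotl 0 (a - 1) c) = c + 1" by (simp add: rotl_mid rotl_lt)
        moreover have "c + 1 < a" using 1 by simp
        ultimately show ?thesis using 1 by (simp add: G_def Cc_def v_def algebra_simps)
      next
        case 2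
        then have "rotl a (N - 1) (rotl 0 (a - 1) c) = 0" using a0 by (simp add: rotl_j rotl_lt)
        then show ?thesis using 2 a0 by (simp add: G_def Cc_def v_def algebra_simps of_nat_diff)
      next
        case 3
        have "rotl 0 (a - 1) c = c" by (rule rotl_gt) (use 3 a0 in linarith)
        moreover have "rotl a (N - 1) c = c + 1" by (rule rotl_mid) (use 3 in auto)
        ultimately have "rotl a (N - 1) (rotl 0 (a - 1) c) = c + 1" by simp
        moreover have "\<not> c < a - 1" "\<not> c < a" using 3 by auto
        ultimately show ?thesis using 3 by (simp add: G_def Cc_def v_def algebra_simps)
      next
        case 4
        have "rotl 0 (a - 1) c = c" by (rule rotl_gt) (use 4 a0 aN in linarith)
        moreover have "rotl a (N - 1) c = a" using 4 aN by (simp add: rotl_j)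
        ultimately have "rotl a (N - 1) (rotl 0 (a - 1) c) = a" by simp
        moreover have "a \<noteq> 0" "\<not> c < a" "\<not> c < a - 1" "(of_nat N :: complex) = of_nat c + 1" using 4 a0 aN by auto
        ultimately show ?thesis by (simp add: G_def Cc_def v_def algebra_simps)
      qed
    qed
    then show ?thesis unfolding xi R12[symmetric] by simp
  qed
  have sg: "(-1 :: 'F) ^ (N - 1 - a) * (-1) ^ (a - 1) = 1"
  proof -
    have "N - 1 - a + (a - 1) = N - 2" using a1 aN by simp
    moreover have "even (N - 2)" using ev aN by simp
    ultimately show ?thesis by (simp add: power_add[symmetric])
  qed
  have P: "Br N a Cc ?p ?r * Br N a Cc ?q ?s - Br N a Cc ?p ?q * Br N a Cc ?r ?s - Br N a Cc ?p ?s * Br N a Cc ?q ?r = 0"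
    by (rule plucker[OF a0 aN'])
  have e: "((-1::'F) ^ (N - 1 - a) * X) * ((-1) ^ (a - 1) * Y) = X * Y" for X Y
  proof -
    have "((-1::'F) ^ (N - 1 - a) * X) * ((-1) ^ (a - 1) * Y) = ((-1) ^ (N - 1 - a) * (-1) ^ (a - 1)) * (X * Y)"
      by (simp only: ac_simps)
    then show ?thesis using sg by simp
  qed
  show ?thesis unfolding A1 A2 B1 B2 C1 C2 e using P by (simp add: algebra_simps)
qed

theorem mainTheorem9:
  fixes n :: nat and Q :: "nat \<Rightarrow> complex \<Rightarrow> 'F::field" and w :: "nat \<Rightarrow> complex \<Rightarrow> 'F"
  assumes "n \<ge> 2"
    and "alg_indep n Q"
    and "\<forall>m\<in>{1..2 * n + 2}. \<forall>u. Lop n Q (w m) u = 0"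
    and "\<forall>u. xi0 w (2 * n + 2) u \<noteq> 0"
  shows "(\<forall>a m u. 1 \<le> a \<and> a \<le> 2 * n + 1 \<and> 1 \<le> m \<longrightarrow>
            xi_am w (2 * n + 2) a m u * xi_am w (2 * n + 2) a m (u + 1)
          - xi_am w (2 * n + 2) a (m + 1) u * xi_am w (2 * n + 2) a (m - 1) (u + 1)
          - xi_am w (2 * n + 2) (a + 1) m u * xi_am w (2 * n + 2) (a - 1) m (u + 1) = 0)
       \<and> (\<forall>a m u. a \<le> 2 * n + 2 \<longrightarrow>
            xi_am w (2 * n + 2) a m u
          = (-1) powi (int a - int (2 * n + 2) div 2 + int m)
            * xi_am w (2 * n + 2) (2 * n + 2 - a) m (u + of_int (int a - int (2 * n + 2) div 2)))"
  proof
  have n1: "1 \<le> n" using assms(1) by simp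
  show "\<forall>a m u. 1 \<le> a \<and> a \<le> 2 * n + 1 \<and> 1 \<le> m \<longrightarrow>
            xi_am w (2 * n + 2) a m u * xi_am w (2 * n + 2) a m (u + 1)
          - xi_am w (2 * n + 2) a (m + 1) u * xi_am w (2 * n + 2) a (m - 1) (u + 1)
          - xi_am w (2 * n + 2) (a + 1) m u * xi_am w (2 * n + 2) (a - 1) m (u + 1) = 0"
  proof (intro allI impI)
    fix a m :: nat and u :: complex assume h: "1 \<le> a \<and> a \<le> 2 * n + 1 \<and> 1 \<le> m"
    show "xi_am w (2 * n + 2) a m u * xi_am w (2 * n + 2) a m (u + 1)
          - xi_am w (2 * n + 2) a (m + 1) u * xi_am w (2 * n + 2) a (m - 1) (u + 1)
          - xi_am w (2 * n + 2) (a + 1) m u * xi_am w (2 * n + 2) (a - 1) m (u + 1) = 0"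
      by (rule part1) (use h in auto)
  qed
  show "\<forall>a m u. a \<le> 2 * n + 2 \<longrightarrow>
            xi_am w (2 * n + 2) a m u
          = (-1) powi (int a - int (2 * n + 2) div 2 + int m)
            * xi_am w (2 * n + 2) (2 * n + 2 - a) m (u + of_int (int a - int (2 * n + 2) div 2))"
  proof (intro allI impI)
    fix a m :: nat and u :: complex assume h: "a \<le> 2 * n + 2"
    show "xi_am w (2 * n + 2) a m u
          = (-1) powi (int a - int (2 * n + 2) div 2 + int m)
            * xi_am w (2 * n + 2) (2 * n + 2 - a) m (u + of_int (int a - int (2 * n + 2) div 2))"
      by (rule part2[OF assms(2) n1 assms(3) h])
  qed
qed

end
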